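(* Let $k,d,n\in\mathbb N$, $Q,K,V\in\mathbb R^{k\times d}$, $A:=K^\top Q/\sqrt{k}$ and $R>0$. Then the self-attention map $f$ with parameters $(A,V)$ is Lipschitz continuous on $B_R^n$ (with respect to the Frobenius norm on input and output), and $$\mathrm{Lip}\big(f_{|B_R^n}\big)\le \sqrt{3}\,\|V\|_2\big(\|A\|_2^2R^4(4n+1)+n\big)^{1/2}.$$
   Context: For $X=(x_1,\dots,x_n)\in(\mathbb R^d)^n$, self-attention with parameters $(A,V)$ is $f(X)=\big(V\sum_{j=1}^nP_{ij}x_j\big)_{1\le i\le n}\in(\mathbb R^k)^n$, where $P_{ij}=\exp(x_i^\top A^\top x_j)/\sum_{l=1}^n\exp(x_i^\top A^\top x_l)$. The spaces $(\mathbb R^d)^n$ and $(\mathbb R^k)^n$ carry the Frobenius norm $\|X\|_F=(\sum_i|x_i|^2)^{1/2}$, where $|\cdot|$ is the Euclidean norm. $B_R\subset\mathbb R^d$ is the closed Euclidean ball of center $0$ and radius $R$. For $\mathcal X\subset(\mathbb R^d)^n$, $\mathrm{Lip}(f_{|\mathcal X})=\sup_{X\ne Y\in\mathcal X}\|f(X)-f(Y)\|_F/\|X-Y\|_F$. $\|\cdot\|_2$ denotes the spectral (operator) norm of a matrix. *)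

theory Defs
  imports "HOL-Analysis.Analysis"
begin

text \<open>Tokens are indexed by a finite type 'n (so n = CARD('n)); a sequence
  X = (x_1,...,x_n) in (R^d)^n is an element of (real^'d)^'n, whose norm is
  exactly the Frobenius norm (sqrt of the sum of squared Euclidean norms).
  Matrices in R^{k x d} are real^'d^'k.\<close>

definition spectral_norm :: "real^'a^'b \<Rightarrow> real" where
  "spectral_norm M = onorm (\<lambda>x. M *v x)"

definition attn_P :: "real^'d^'d \<Rightarrow> (real^'d)^'n \<Rightarrow> 'n \<Rightarrow> 'n \<Rightarrow> real" where
  "attn_P A X i j =
     exp ((X$i) \<bullet> (transpose A *v (X$j))) /
     (\<Sum>l\<in>UNIV. exp ((X$i) \<bullet> (transpose A *v (X$l))))"

definition self_attention ::
  "real^'d^'d \<Rightarrow> real^'d^'k \<Rightarrow> (real^'d)^'n \<Rightarrow> (real^'k)^'n" where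
  "self_attention A V X = (\<chi> i. V *v (\<Sum>j\<in>UNIV. attn_P A X i j *\<^sub>R (X$j)))"

definition ball_tokens :: "real \<Rightarrow> ((real^'d)^'n) set" where
  "ball_tokens R = {X. \<forall>i. norm (X$i) \<le> R}"

end

theory Submission
  imports Defs
begin

lemma sq_sum_le: fixes a b :: real shows "(a+b)^2 \<le> 2*(a^2+b^2)"
proof -
  have "0 \<le> (a-b)^2" by simp
  also have "(a-b)^2 = a^2+b^2-2*a*b" by (simp add: power2_diff)
  finally have h: "0 \<le> a^2+b^2-2*a*b" .
  have "(a+b)^2 = a^2+b^2+2*a*b" by (simp add: power2_sum)
  thus ?thesis using h by (simp add: algebra_simps)
qed



lemma wcov:
  fixes S :: "'j set" and p a c :: "'j \<Rightarrow> real"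
  assumes fin: "finite S" and p0: "\<forall>j\<in>S. p j \<ge> 0" and p1: "sum p S = 1"
    and ba: "\<forall>j\<in>S. (a j)^2 \<le> B" and bc: "\<forall>j\<in>S. \<bar>c j\<bar> \<le> C"
  shows "\<bar>(\<Sum>j\<in>S. p j * a j * c j) - (\<Sum>j\<in>S. p j * a j) * (\<Sum>j\<in>S. p j * c j)\<bar> \<le> C * sqrt B"
proof -
  have "S \<noteq> {}" using p1 by auto
  then obtain j0 where j0: "j0 \<in> S" by auto
  have C0: "C \<ge> 0" using bc j0 by force
  have B0: "B \<ge> 0" using ba j0 by (meson order_trans zero_le_power2)
  define m where "m = (\<Sum>j\<in>S. p j * a j)"
  have T: "(\<Sum>j\<in>S. p j * a j * c j) - m * (\<Sum>j\<in>S. p j * c j)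
        = (\<Sum>j\<in>S. (sqrt (p j) * (a j - m)) * (sqrt (p j) * c j))"
  proof -
    have "(\<Sum>j\<in>S. (sqrt (p j) * (a j - m)) * (sqrt (p j) * c j)) = (\<Sum>j\<in>S. p j * a j * c j - m * (p j * c j))"
      apply (rule sum.cong, simp)
      using p0 by (simp add: algebra_simps)
    also have "\<dots> = (\<Sum>j\<in>S. p j * a j * c j) - m * (\<Sum>j\<in>S. p j * c j)"
      by (simp add: sum_subtractf sum_distrib_left)
    finally show ?thesis by simp
  qed
  have S1: "(\<Sum>j\<in>S. (sqrt (p j) * (a j - m))^2) \<le> B"
  proof -
    have "(\<Sum>j\<in>S. (sqrt (p j) * (a j - m))^2) = (\<Sum>j\<in>S. p j * (a j)^2 - 2 * m * (p j * a j) + m^2 * p j)"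
      apply (rule sum.cong, simp) using p0 by (simp add: power2_eq_square algebra_simps power_mult_distrib)
    also have "\<dots> = (\<Sum>j\<in>S. p j * (a j)^2) - m^2"
      using p1 by (simp add: sum.distrib sum_subtractf sum_distrib_left[symmetric] m_def power2_eq_square)
    also have "\<dots> \<le> (\<Sum>j\<in>S. p j * B)"
      using sum_mono[of S "\<lambda>j. p j * (a j)^2" "\<lambda>j. p j * B"] p0 ba
      by (smt (verit) mult_left_mono zero_le_power2)
    also have "\<dots> = B" using p1 by (simp add: sum_distrib_right[symmetric])
    finally show ?thesis .
  qed
  have S2: "(\<Sum>j\<in>S. (sqrt (p j) * c j)^2) \<le> C^2"
  proof -
    have "(\<Sum>j\<in>S. (sqrt (p j) * c j)^2) = (\<Sum>j\<in>S. p j * (c j)^2)"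
      apply (rule sum.cong, simp) using p0 by (simp add: power_mult_distrib)
    also have "\<dots> \<le> (\<Sum>j\<in>S. p j * C^2)"
    proof (rule sum_mono)
      fix j assume j: "j \<in> S"
      have "(c j)^2 = \<bar>c j\<bar>^2" by simp
      also have "\<dots> \<le> C^2" using bc j by (intro power_mono) auto
      finally show "p j * (c j)^2 \<le> p j * C^2" using p0 j by (simp add: mult_left_mono)
    qed

    also have "\<dots> = C^2" using p1 by (simp add: sum_distrib_right[symmetric])
    finally show ?thesis .
  qed
  have "((\<Sum>j\<in>S. p j * a j * c j) - m * (\<Sum>j\<in>S. p j * c j))^2 \<le> B * C^2"
    unfolding T
    by (rule order_trans[OF Cauchy_Schwarz_ineq_sum]) (rule mult_mono[OF S1 S2], simp_all add: B0 sum_nonneg)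
  hence "\<bar>(\<Sum>j\<in>S. p j * a j * c j) - m * (\<Sum>j\<in>S. p j * c j)\<bar> \<le> sqrt (B * C^2)"
    using real_le_rsqrt real_sqrt_abs by (metis real_sqrt_le_mono)
  also have "\<dots> = C * sqrt B" using C0 by (simp add: real_sqrt_mult)
  finally show ?thesis unfolding m_def .
qed


lemma softmax_mvt:
  fixes S :: "'j set" and s c sd cd :: "'j \<Rightarrow> real \<Rightarrow> real"
  assumes fin: "finite S" and ne: "S \<noteq> {}"
   and ds: "\<And>j t. j\<in>S \<Longrightarrow> (s j has_real_derivative sd j t) (at t)"
   and dc: "\<And>j t. j\<in>S \<Longrightarrow> (c j has_real_derivative cd j t) (at t)"
   and bs: "\<And>j t. j\<in>S \<Longrightarrow> 0\<le>t \<Longrightarrow> t\<le>1 \<Longrightarrow> (sd j t)^2 \<le> B"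
   and bc: "\<And>j t. j\<in>S \<Longrightarrow> 0\<le>t \<Longrightarrow> t\<le>1 \<Longrightarrow> \<bar>c j t\<bar> \<le> C"
   and bcd: "\<And>j t. j\<in>S \<Longrightarrow> 0\<le>t \<Longrightarrow> t\<le>1 \<Longrightarrow> \<bar>cd j t\<bar> \<le> E"
  shows "\<bar>(\<Sum>j\<in>S. exp (s j 1) * c j 1)/(\<Sum>j\<in>S. exp (s j 1)) - (\<Sum>j\<in>S. exp (s j 0) * c j 0)/(\<Sum>j\<in>S. exp (s j 0))\<bar> \<le> C * sqrt B + E"
proof -
  define N where "N t = (\<Sum>j\<in>S. exp (s j t) * c j t)" for t
  define D where "D t = (\<Sum>j\<in>S. exp (s j t))" for t
  define N' where "N' t = (\<Sum>j\<in>S. exp (s j t) * (sd j t * c j t + cd j t))" for t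
  define D' where "D' t = (\<Sum>j\<in>S. exp (s j t) * sd j t)" for t
  have Dpos: "D t > 0" for t unfolding D_def using fin ne by (intro sum_pos) auto
  have dN: "(N has_real_derivative N' t) (at t)" for t
    unfolding N_def N'_def
    apply (rule DERIV_sum)
    subgoal premises jS for j
      using DERIV_mult[OF DERIV_fun_exp[OF ds[OF jS]] dc[OF jS]] by (simp add: algebra_simps)
    done
  have dD: "(D has_real_derivative D' t) (at t)" for t
    unfolding D_def D'_def
    apply (rule DERIV_sum)
    subgoal premises jS for j
      using DERIV_fun_exp[OF ds[OF jS]] by (simp add: algebra_simps)
    done
  have dphi: "((\<lambda>t. N t / D t) has_real_derivative (N' t * D t - N t * D' t) / (D t * D t)) (at t)" for t
    by (rule DERIV_divide[OF dN dD]) (use Dpos in \<open>simp add: less_imp_neq[symmetric]\<close>)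
  obtain z where z: "0 < z" "z < 1" and eq: "N 1 / D 1 - N 0 / D 0 = (1 - 0) * ((N' z * D z - N z * D' z) / (D z * D z))"
    using MVT2[of 0 1 "\<lambda>t. N t / D t" "\<lambda>t. (N' t * D t - N t * D' t) / (D t * D t)"] dphi by auto
  define p where "p j = exp (s j z) / D z" for j
  have p0: "\<forall>j\<in>S. p j \<ge> 0" unfolding p_def using Dpos[of z] by (simp add: less_imp_le)
  have p1: "sum p S = 1" unfolding p_def using Dpos[of z] by (simp add: sum_divide_distrib[symmetric] D_def)
  have key: "(N' z * D z - N z * D' z) / (D z * D z)
      = ((\<Sum>j\<in>S. p j * sd j z * c j z) - (\<Sum>j\<in>S. p j * sd j z) * (\<Sum>j\<in>S. p j * c j z)) + (\<Sum>j\<in>S. p j * cd j z)"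
  proof -
    have a: "N' z / D z = (\<Sum>j\<in>S. p j * sd j z * c j z) + (\<Sum>j\<in>S. p j * cd j z)"
      unfolding N'_def p_def sum_divide_distrib sum.distrib[symmetric] by (rule sum.cong) (use Dpos[of z] in \<open>auto simp: field_simps\<close>)
    have b: "N z / D z = (\<Sum>j\<in>S. p j * c j z)"
      unfolding N_def p_def sum_divide_distrib by (rule sum.cong) (use Dpos[of z] in \<open>auto simp: field_simps\<close>)
    have c: "D' z / D z = (\<Sum>j\<in>S. p j * sd j z)"
      unfolding D'_def p_def sum_divide_distrib by (rule sum.cong) (use Dpos[of z] in \<open>auto simp: field_simps\<close>)
    have "(N' z * D z - N z * D' z) / (D z * D z) = N' z / D z - (N z / D z) * (D' z / D z)"
      using Dpos[of z] by (simp add: field_simps)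
    thus ?thesis using a b c by simp
  qed
  have t1: "\<bar>(\<Sum>j\<in>S. p j * sd j z * c j z) - (\<Sum>j\<in>S. p j * sd j z) * (\<Sum>j\<in>S. p j * c j z)\<bar> \<le> C * sqrt B"
    by (rule wcov[OF fin p0 p1]) (use bs bc z in auto)
  have t2: "\<bar>\<Sum>j\<in>S. p j * cd j z\<bar> \<le> E"
  proof -
    have "\<bar>\<Sum>j\<in>S. p j * cd j z\<bar> \<le> (\<Sum>j\<in>S. \<bar>p j * cd j z\<bar>)" by (rule sum_abs)
    also have "\<dots> \<le> (\<Sum>j\<in>S. p j * E)"
      apply (rule sum_mono) using p0 bcd z by (simp add: abs_mult mult_left_mono)
    also have "\<dots> = E" using p1 by (simp add: sum_distrib_right[symmetric])
    finally show ?thesis .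
  qed
  have "\<bar>N 1 / D 1 - N 0 / D 0\<bar> \<le> C * sqrt B + E"
    using eq key t1 t2 by simp
  thus ?thesis unfolding N_def D_def .
qed


lemma deriv_quad:
  fixes M :: "real^'d^'d" and u v p q :: "real^'d"
  shows "((\<lambda>t. (u + t*\<^sub>R v) \<bullet> (M *v (p + t*\<^sub>R q))) has_real_derivative
     v \<bullet> (M *v (p + t*\<^sub>R q)) + (u + t*\<^sub>R v) \<bullet> (M *v q)) (at t)"
proof -
  have eq: "(\<lambda>t. (u + t*\<^sub>R v) \<bullet> (M *v (p + t*\<^sub>R q))) = (\<lambda>t. u \<bullet> (M *v p) + t * (v \<bullet> (M *v p) + u \<bullet> (M *v q)) + t * t * (v \<bullet> (M *v q)))"
    by (rule ext) (simp add: matrix_vector_right_distrib matrix_vector_mult_scaleR inner_add_left inner_add_right algebra_simps)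
  show ?thesis unfolding eq
    apply (rule derivative_eq_intros refl)+
    by (simp add: matrix_vector_right_distrib matrix_vector_mult_scaleR inner_add_left inner_add_right algebra_simps)
qed

lemma bil_bound:
  fixes A :: "real^'d^'d" and x y :: "real^'d"
  shows "\<bar>x \<bullet> (transpose A *v y)\<bar> \<le> spectral_norm A * norm x * norm y"
proof -
  have "x \<bullet> (transpose A *v y) = (A *v x) \<bullet> y"
    by (metis dot_lmul_matrix vector_transpose_matrix)
  also have "\<bar>\<dots>\<bar> \<le> norm (A *v x) * norm y" by (rule Cauchy_Schwarz_ineq2)
  also have "\<dots> \<le> spectral_norm A * norm x * norm y"
    unfolding spectral_norm_def
    by (intro mult_right_mono onorm[OF matrix_vector_mul_bounded_linear]) simp
  finally show ?thesis .
qed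

lemma seg_bound:
  fixes x y :: "'a::real_normed_vector"
  assumes "norm x \<le> R" "norm y \<le> R" "0 \<le> t" "t \<le> 1"
  shows "norm (y + t *\<^sub>R (x - y)) \<le> R"
proof -
  have "y + t *\<^sub>R (x - y) = (1 - t) *\<^sub>R y + t *\<^sub>R x" by (simp add: algebra_simps)
  also have "norm \<dots> \<le> (1-t) * norm y + t * norm x"
    using assms by (metis (no_types, lifting) abs_of_nonneg diff_ge_0_iff_ge norm_scaleR norm_triangle_ineq)
  also have "\<dots> \<le> (1-t) * R + t * R" using assms by (intro add_mono mult_left_mono) auto
  also have "\<dots> = R" by (simp add: algebra_simps)
  finally show ?thesis .
qed



lemma per_token:
  fixes A :: "real^'d^'d" and X Y :: "(real^'d)^'n" and w :: "real^'d" and i :: 'n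
  assumes X: "X \<in> ball_tokens R" and Y: "Y \<in> ball_tokens R"
  shows "\<bar>w \<bullet> ((\<Sum>j\<in>UNIV. attn_P A X i j *\<^sub>R (X$j)) - (\<Sum>j\<in>UNIV. attn_P A Y i j *\<^sub>R (Y$j)))\<bar>
     \<le> (R * norm w) * sqrt (2 * (spectral_norm A)^2 * R^2 * ((norm (X$i - Y$i))^2 + (norm (X - Y))^2))
        + norm (X - Y) * norm w"
proof -
  define M where "M = transpose A"
  define \<alpha> where "\<alpha> = spectral_norm A"
  define z where "z j t = Y$j + t *\<^sub>R (X$j - Y$j)" for j t
  define s where "s j t = z i t \<bullet> (M *v z j t)" for j t
  define sd where "sd j t = (X$i - Y$i) \<bullet> (M *v z j t) + z i t \<bullet> (M *v (X$j - Y$j))" for j t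
  define c where "c j t = z j t \<bullet> w" for j t
  define cd where "cd j t = (X$j - Y$j) \<bullet> w" for j :: 'n and t :: real
  define B where "B = 2 * \<alpha>^2 * R^2 * ((norm (X$i - Y$i))^2 + (norm (X - Y))^2)"
  have zb: "norm (z j t) \<le> R" if "0 \<le> t" "t \<le> 1" for j t
    unfolding z_def using X Y that by (intro seg_bound) (auto simp: ball_tokens_def)
  have "norm (X$i) \<le> R" using X by (simp add: ball_tokens_def)
  hence R0: "0 \<le> R" by (rule order_trans[OF norm_ge_zero])
  have a0: "0 \<le> \<alpha>" unfolding \<alpha>_def spectral_norm_def by (rule onorm_pos_le[OF matrix_vector_mul_bounded_linear])
  have dj: "norm (X$j - Y$j) \<le> norm (X - Y)" for j
    using Finite_Cartesian_Product.norm_nth_le[of "X - Y" j] by simp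
  have ds: "(s j has_real_derivative sd j t) (at t)" for j t
    unfolding s_def sd_def z_def by (rule deriv_quad)
  have dc: "(c j has_real_derivative cd j t) (at t)" for j t
  proof -
    have e: "c j = (\<lambda>t. Y$j \<bullet> w + t * ((X$j - Y$j) \<bullet> w))"
      unfolding c_def z_def by (simp add: inner_add_left fun_eq_iff)
    show ?thesis unfolding e cd_def
      by (rule derivative_eq_intros refl)+ simp
  qed
  have bs: "(sd j t)^2 \<le> B" if "0 \<le> t" "t \<le> 1" for j t
  proof -
    have "\<bar>sd j t\<bar> \<le> \<alpha> * norm (X$i - Y$i) * R + \<alpha> * R * norm (X$i - Y$i) * 0 + \<alpha> * R * norm (X$j - Y$j)"
    proof -
      have 1: "\<bar>(X$i - Y$i) \<bullet> (M *v z j t)\<bar> \<le> \<alpha> * norm (X$i - Y$i) * R"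
        unfolding M_def \<alpha>_def
        by (rule order_trans[OF bil_bound[of "X$i - Y$i" A "z j t"]], rule mult_left_mono[OF zb[OF that]])
           (use a0 in \<open>simp add: \<alpha>_def\<close>)
      have 2: "\<bar>z i t \<bullet> (M *v (X$j - Y$j))\<bar> \<le> \<alpha> * R * norm (X$j - Y$j)"
        unfolding M_def \<alpha>_def
        by (rule order_trans[OF bil_bound[of "z i t" A "X$j - Y$j"]], intro mult_right_mono mult_left_mono zb[OF that])
           (use a0 in \<open>simp_all add: \<alpha>_def\<close>)
      show ?thesis unfolding sd_def using 1 2 by simp
    qed
    hence "\<bar>sd j t\<bar> \<le> \<alpha> * R * (norm (X$i - Y$i) + norm (X$j - Y$j))" by (simp add: algebra_simps)
    hence "(sd j t)^2 \<le> (\<alpha> * R * (norm (X$i - Y$i) + norm (X$j - Y$j)))^2"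
      by (metis abs_ge_zero power2_abs power_mono)
    also have "\<dots> = \<alpha>^2 * R^2 * (norm (X$i - Y$i) + norm (X$j - Y$j))^2" by (simp add: power_mult_distrib)
    also have "\<dots> \<le> \<alpha>^2 * R^2 * (2 * ((norm (X$i - Y$i))^2 + (norm (X - Y))^2))"
    proof (rule mult_left_mono)
      have "(norm (X$j - Y$j))^2 \<le> (norm (X - Y))^2" using dj[of j] by (simp add: power_mono)
      moreover have "(norm (X$i - Y$i) + norm (X$j - Y$j))^2 \<le> 2 * ((norm (X$i - Y$i))^2 + (norm (X$j - Y$j))^2)"
        by (rule sq_sum_le)
      ultimately show "(norm (X$i - Y$i) + norm (X$j - Y$j))^2 \<le> 2 * ((norm (X$i - Y$i))^2 + (norm (X - Y))^2)" by (smt (verit))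
    qed simp
    finally show ?thesis unfolding B_def by (simp add: algebra_simps)
  qed
  have bc: "\<bar>c j t\<bar> \<le> R * norm w" if "0 \<le> t" "t \<le> 1" for j t
    unfolding c_def
    by (rule order_trans[OF Cauchy_Schwarz_ineq2], rule mult_right_mono[OF zb[OF that]]) simp
  have bcd: "\<bar>cd j t\<bar> \<le> norm (X - Y) * norm w" for j t
    unfolding cd_def
    by (rule order_trans[OF Cauchy_Schwarz_ineq2], rule mult_right_mono[OF dj]) simp
  have main: "\<bar>(\<Sum>j\<in>UNIV. exp (s j 1) * c j 1)/(\<Sum>j\<in>UNIV. exp (s j 1)) - (\<Sum>j\<in>UNIV. exp (s j 0) * c j 0)/(\<Sum>j\<in>UNIV. exp (s j 0))\<bar>
      \<le> (R * norm w) * sqrt B + norm (X - Y) * norm w"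
    by (rule softmax_mvt[where sd=sd and cd=cd]) (use ds dc bs bc bcd in auto)
  have g: "w \<bullet> (\<Sum>j\<in>UNIV. attn_P A Z i j *\<^sub>R (Z$j)) = (\<Sum>j\<in>UNIV. exp (Z$i \<bullet> (M *v Z$j)) * (Z$j \<bullet> w))/(\<Sum>j\<in>UNIV. exp (Z$i \<bullet> (M *v Z$j)))"
    for Z :: "(real^'d)^'n"
    unfolding attn_P_def M_def inner_sum_right sum_divide_distrib
    by (rule sum.cong) (auto simp: inner_commute)
  have z1: "z j 1 = X$j" and z0: "z j 0 = Y$j" for j unfolding z_def by simp_all
  show ?thesis
    using main unfolding inner_diff_right g s_def c_def z1 z0 B_def \<alpha>_def M_def .
qed



lemma norm_vec_sq: "(norm (x :: 'a::real_normed_vector^'n))^2 = (\<Sum>i\<in>UNIV. (norm (x$i))^2)"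
  unfolding norm_vec_def L2_set_def by (simp add: sum_nonneg)

theorem mainTheorem1:
  fixes Q K V :: "real^'d^'k" and R :: real
  assumes "R > 0"
  defines "A \<equiv> (1 / sqrt (real CARD('k))) *\<^sub>R (transpose K ** Q)"
  shows "(sqrt 3 * spectral_norm V *
          sqrt ((spectral_norm A)\<^sup>2 * R ^ 4 * (4 * real CARD('n) + 1) + real CARD('n)))
         -lipschitz_on (ball_tokens R :: ((real^'d)^'n) set) (self_attention A V)"
proof -
  define \<alpha> where "\<alpha> = spectral_norm A"
  define \<nu> where "\<nu> = spectral_norm V"
  define n where "n = real CARD('n)"
  have a0: "0 \<le> \<alpha>" unfolding \<alpha>_def spectral_norm_def by (rule onorm_pos_le[OF matrix_vector_mul_bounded_linear])
  have v0: "0 \<le> \<nu>" unfolding \<nu>_def spectral_norm_def by (rule onorm_pos_le[OF matrix_vector_mul_bounded_linear])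
  have n1: "1 \<le> n" unfolding n_def by simp
  define L where "L = sqrt 3 * \<nu> * sqrt (\<alpha>\<^sup>2 * R ^ 4 * (4 * n + 1) + n)"
  have L0: "0 \<le> L" unfolding L_def using v0 n1 by simp
  have L2: "L^2 = 3 * \<nu>^2 * (\<alpha>\<^sup>2 * R ^ 4 * (4 * n + 1) + n)"
    unfolding L_def using n1 by (simp add: power_mult_distrib)
  show ?thesis
    unfolding \<alpha>_def[symmetric] \<nu>_def[symmetric] n_def[symmetric] L_def[symmetric]
  proof (rule lipschitz_onI[OF _ L0])
    fix X Y :: "(real^'d)^'n"
    assume X: "X \<in> ball_tokens R" and Y: "Y \<in> ball_tokens R"
    define g where "g Z i = (\<Sum>j\<in>UNIV. attn_P A Z i j *\<^sub>R (Z$j))" for Z :: "(real^'d)^'n" and i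
    define \<delta> where "\<delta> = norm (X - Y)"
    define d where "d i = norm (X$i - Y$i)" for i
    have D: "(self_attention A V X - self_attention A V Y) $ i = V *v (g X i - g Y i)" for i
      unfolding self_attention_def g_def by (simp add: matrix_vector_mult_diff_distrib)
    have Ki: "norm (g X i - g Y i) \<le> R * sqrt (2 * \<alpha>^2 * R^2 * ((d i)^2 + \<delta>^2)) + \<delta>" for i
    proof -
      let ?w = "g X i - g Y i"
      have h: "(norm ?w)^2 \<le> norm ?w * (R * sqrt (2 * \<alpha>^2 * R^2 * ((d i)^2 + \<delta>^2)) + \<delta>)"
        using per_token[OF X Y, of ?w A i] unfolding g_def[symmetric] d_def \<delta>_def \<alpha>_def
        by (simp add: power2_norm_eq_inner algebra_simps)
      have K0: "0 \<le> R * sqrt (2 * \<alpha>^2 * R^2 * ((d i)^2 + \<delta>^2)) + \<delta>"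
        using assms(1) unfolding \<delta>_def by simp
      show ?thesis
      proof (cases "norm ?w = 0")
        case True then show ?thesis using K0 by simp
      next
        case False then have "norm ?w > 0" by simp
        thus ?thesis using h by (simp add: power2_eq_square)
      qed
    qed
    have Ki2: "(norm (g X i - g Y i))^2 \<le> 4 * \<alpha>^2 * R^4 * ((d i)^2 + \<delta>^2) + 2 * \<delta>^2" for i
    proof -
      let ?B = "2 * \<alpha>^2 * R^2 * ((d i)^2 + \<delta>^2)"
      have B0: "0 \<le> ?B" by simp
      have "(norm (g X i - g Y i))^2 \<le> (R * sqrt ?B + \<delta>)^2"
        by (rule power_mono[OF Ki]) simp
      also have "\<dots> \<le> 2 * (R * sqrt ?B)^2 + 2 * \<delta>^2"
        using sq_sum_le[of "R * sqrt ?B" \<delta>] by (simp only: distrib_left)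
      also have "(R * sqrt ?B)^2 = R^2 * ?B" using B0 by (simp add: power_mult_distrib)
      also have "2 * (R^2 * ?B) + 2 * \<delta>^2 = 4 * \<alpha>^2 * R^4 * ((d i)^2 + \<delta>^2) + 2 * \<delta>^2"
        by (simp add: mult_ac power4_eq_xxxx power2_eq_square)
      finally show ?thesis .
    qed
    have sd: "(\<Sum>i\<in>UNIV. (d i)^2) = \<delta>^2"
      unfolding d_def \<delta>_def norm_vec_sq[of "X - Y"] by simp
    have "(norm (self_attention A V X - self_attention A V Y))^2
        = (\<Sum>i\<in>UNIV. (norm (V *v (g X i - g Y i)))^2)"
      unfolding norm_vec_sq D ..
    also have "\<dots> \<le> (\<Sum>i\<in>UNIV. \<nu>^2 * (4 * \<alpha>^2 * R^4 * ((d i)^2 + \<delta>^2) + 2 * \<delta>^2))"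
    proof (rule sum_mono)
      fix i
      have "norm (V *v (g X i - g Y i)) \<le> \<nu> * norm (g X i - g Y i)"
        unfolding \<nu>_def spectral_norm_def by (rule onorm[OF matrix_vector_mul_bounded_linear])
      hence "(norm (V *v (g X i - g Y i)))^2 \<le> (\<nu> * norm (g X i - g Y i))^2"
        by (rule power_mono) simp
      also have "\<dots> = \<nu>^2 * (norm (g X i - g Y i))^2" by (simp add: power_mult_distrib)
      also have "\<dots> \<le> \<nu>^2 * (4 * \<alpha>^2 * R^4 * ((d i)^2 + \<delta>^2) + 2 * \<delta>^2)"
        by (rule mult_left_mono[OF Ki2]) simp
      finally show "(norm (V *v (g X i - g Y i)))^2 \<le> \<nu>^2 * (4 * \<alpha>^2 * R^4 * ((d i)^2 + \<delta>^2) + 2 * \<delta>^2)" .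
    qed
    also have "\<dots> = \<nu>^2 * (4 * \<alpha>^2 * R^4 * (\<delta>^2 + n * \<delta>^2) + 2 * n * \<delta>^2)"
    proof -
      have "(\<Sum>i\<in>UNIV. \<nu>^2 * (4 * \<alpha>^2 * R^4 * ((d i)^2 + \<delta>^2) + 2 * \<delta>^2))
          = (\<Sum>i\<in>UNIV. (\<nu>^2 * (4 * \<alpha>^2 * R^4)) * (d i)^2 + \<nu>^2 * (4 * \<alpha>^2 * R^4 * \<delta>^2 + 2 * \<delta>^2))"
        by (rule sum.cong) (simp_all add: algebra_simps)
      also have "\<dots> = (\<nu>^2 * (4 * \<alpha>^2 * R^4)) * (\<Sum>i\<in>UNIV. (d i)^2) + n * (\<nu>^2 * (4 * \<alpha>^2 * R^4 * \<delta>^2 + 2 * \<delta>^2))"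
        unfolding sum.distrib sum_distrib_left[symmetric] n_def by (simp add: ring_distribs mult_ac)
      also have "\<dots> = \<nu>^2 * (4 * \<alpha>^2 * R^4 * (\<delta>^2 + n * \<delta>^2) + 2 * n * \<delta>^2)"
        unfolding sd by (simp add: ring_distribs mult_ac)
      finally show ?thesis .
    qed
    also have "\<dots> \<le> L^2 * \<delta>^2"
    proof -
      have "4 * \<alpha>^2 * R^4 * (\<delta>^2 + n * \<delta>^2) + 2 * n * \<delta>^2 \<le> 3 * (\<alpha>\<^sup>2 * R ^ 4 * (4 * n + 1) + n) * \<delta>^2"
      proof -
        have "4 * (1 + n) \<le> 3 * (4 * n + 1)" using n1 by simp
        hence "(\<alpha>^2 * R^4 * \<delta>^2) * (4 * (1 + n)) \<le> (\<alpha>^2 * R^4 * \<delta>^2) * (3 * (4 * n + 1))"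
          by (intro mult_left_mono) auto
        moreover have "2 * n * \<delta>^2 \<le> 3 * n * \<delta>^2" using n1 by (intro mult_right_mono) auto
        ultimately show ?thesis by (simp add: algebra_simps)
      qed
      hence "\<nu>^2 * (4 * \<alpha>^2 * R^4 * (\<delta>^2 + n * \<delta>^2) + 2 * n * \<delta>^2) \<le> \<nu>^2 * (3 * (\<alpha>\<^sup>2 * R ^ 4 * (4 * n + 1) + n) * \<delta>^2)"
        by (rule mult_left_mono) simp
      also have "\<dots> = L^2 * \<delta>^2" unfolding L2 by (simp add: algebra_simps)
      finally show ?thesis .
    qed
    finally have "(norm (self_attention A V X - self_attention A V Y))^2 \<le> (L * \<delta>)^2"
      by (simp add: power_mult_distrib)
    hence "norm (self_attention A V X - self_attention A V Y) \<le> L * \<delta>"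
      by (rule power2_le_imp_le) (simp add: L0 \<delta>_def)
    thus "dist (self_attention A V X) (self_attention A V Y) \<le> L * dist X Y"
      unfolding dist_norm \<delta>_def .
  qed
qed

end
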